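(* Let $R$ be a commutative ring, $n\ge2$, and $\varepsilon\in{\rm E}_{2n}(R)$. Then there exists $\varepsilon_0\in{\rm E}_{\psi_n}(R)\subseteq {\rm E}_{2n-1}(R)$ such that $\varepsilon^t\,\psi_n\,\varepsilon=(1\perp\varepsilon_0)^t\,\psi_n\,(1\perp\varepsilon_0)$.
   Context: All rings are commutative with identity. ${\rm E}_m(R)$ is the subgroup of ${\rm SL}_m(R)$ generated by $I_m+\lambda e_{ij}$ ($i\neq j$, $\lambda\in R$). $\psi_n=\sum_{i=1}^n e_{2i-1,2i}-\sum_{i=1}^n e_{2i,2i-1}$. $1\perp\varepsilon_0$ denotes $\begin{pmatrix}1&0\\0&\varepsilon_0\end{pmatrix}$. Elements of $R^m$ are row vectors, ${}^t$ is transpose. For an invertible alternating (of the form $\nu-\nu^t$) $2n\times2n$ matrix $\varphi$ write $\varphi=\begin{pmatrix}0&-c\\ c^t&\nu\end{pmatrix}$, $\varphi^{-1}=\begin{pmatrix}0&d\\ -d^t&\mu\end{pmatrix}$ with $c,d\in R^{2n-1}$, and set $\alpha_\varphi(v)=I_{2n-1}+d^tv\nu$, $\beta_\varphi(v)=I_{2n-1}+\mu v^tc$; ${\rm E}_\varphi(R)$ is the subgroup of ${\rm GL}_{2n-1}(R)$ generated by all $\alpha_\varphi(v),\beta_\varphi(v)$, $v\in R^{2n-1}$. *)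

theory Defs
  imports "Jordan_Normal_Form.Matrix"
begin

text \<open>Matrices are Jordan_Normal_Form matrices, indices start at 0.
  Rows/columns numbered 1..m in the paper correspond to 0..m-1 here.\<close>

definition elem_mat :: "nat \<Rightarrow> nat \<Rightarrow> nat \<Rightarrow> 'a::comm_ring_1 \<Rightarrow> 'a mat" where
  "elem_mat m i j lam = 1\<^sub>m m + mat m m (\<lambda>(a,b). if a = i \<and> b = j then lam else 0)"

inductive_set gen_group :: "nat \<Rightarrow> 'a::comm_ring_1 mat set \<Rightarrow> 'a mat set"
  for m :: nat and gens :: "'a mat set" where
  one: "1\<^sub>m m \<in> gen_group m gens"
| mult: "A \<in> gen_group m gens \<Longrightarrow> g \<in> gens \<Longrightarrow> A * g \<in> gen_group m gens"
| mult_inv: "A \<in> gen_group m gens \<Longrightarrow> g \<in> gens \<Longrightarrow> h \<in> carrier_mat m m \<Longrightarrow>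
      g * h = 1\<^sub>m m \<Longrightarrow> h * g = 1\<^sub>m m \<Longrightarrow> A * h \<in> gen_group m gens"

definition Elem :: "nat \<Rightarrow> 'a::comm_ring_1 mat set" where
  "Elem m = gen_group m {elem_mat m i j lam | i j lam. i < m \<and> j < m \<and> i \<noteq> j}"

text \<open>psi_n: entries (2i-1,2i) = 1 and (2i,2i-1) = -1 (1-based), i = 1..n.\<close>
definition psi :: "nat \<Rightarrow> 'a::comm_ring_1 mat" where
  "psi n = mat (2*n) (2*n) (\<lambda>(a,b).
     if even a \<and> b = a + 1 then 1 else if odd a \<and> b + 1 = a then -1 else 0)"

definition one_perp :: "'a::comm_ring_1 mat \<Rightarrow> 'a mat" where
  "one_perp A = mat (dim_row A + 1) (dim_col A + 1) (\<lambda>(a,b).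
     if a = 0 \<and> b = 0 then 1 else if a = 0 \<or> b = 0 then 0 else A $$ (a - 1, b - 1))"

definition mat_inv :: "'a::comm_ring_1 mat \<Rightarrow> 'a mat" where
  "mat_inv phi = (SOME B. B \<in> carrier_mat (dim_row phi) (dim_row phi) \<and>
       phi * B = 1\<^sub>m (dim_row phi) \<and> B * phi = 1\<^sub>m (dim_row phi))"

text \<open>Decomposition phi = [[0,-c],[c^t,nu]], phi^-1 = [[0,d],[-d^t,mu]],
  with c, d row vectors of length dim-1.\<close>
definition phi_c :: "'a::comm_ring_1 mat \<Rightarrow> 'a vec" where
  "phi_c phi = vec (dim_row phi - 1) (\<lambda>j. - (phi $$ (0, j + 1)))"
definition phi_nu :: "'a::comm_ring_1 mat \<Rightarrow> 'a mat" where
  "phi_nu phi = mat (dim_row phi - 1) (dim_row phi - 1) (\<lambda>(a,b). phi $$ (a + 1, b + 1))"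
definition phi_d :: "'a::comm_ring_1 mat \<Rightarrow> 'a vec" where
  "phi_d phi = vec (dim_row phi - 1) (\<lambda>j. mat_inv phi $$ (0, j + 1))"
definition phi_mu :: "'a::comm_ring_1 mat \<Rightarrow> 'a mat" where
  "phi_mu phi = mat (dim_row phi - 1) (dim_row phi - 1) (\<lambda>(a,b). mat_inv phi $$ (a + 1, b + 1))"

definition alpha_phi :: "'a::comm_ring_1 mat \<Rightarrow> 'a vec \<Rightarrow> 'a mat" where
  "alpha_phi phi v = (let m = dim_row phi - 1 in
     1\<^sub>m m + mat_of_cols m [phi_d phi] * mat_of_rows m [v] * phi_nu phi)"
definition beta_phi :: "'a::comm_ring_1 mat \<Rightarrow> 'a vec \<Rightarrow> 'a mat" where
  "beta_phi phi v = (let m = dim_row phi - 1 in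
     1\<^sub>m m + phi_mu phi * mat_of_cols m [v] * mat_of_rows m [phi_c phi])"

definition E_phi :: "'a::comm_ring_1 mat \<Rightarrow> 'a mat set" where
  "E_phi phi = gen_group (dim_row phi - 1)
     ({alpha_phi phi v | v. v \<in> carrier_vec (dim_row phi - 1)} \<union>
      {beta_phi phi v | v. v \<in> carrier_vec (dim_row phi - 1)})"

end

theory Submission
  imports Defs
begin

lemma mult_entry:
  assumes "A \<in> carrier_mat r K" "B \<in> carrier_mat K c" "i < r" "j < c"
  shows "(A * B) $$ (i,j) = (\<Sum>k<K. A $$ (i,k) * B $$ (k,j))"
  using assms by (auto simp: scalar_prod_def lessThan_atLeast0 intro!: sum.cong)

lemma pair_sum: "(\<Sum>k<2*n. F k) = (\<Sum>i<n. F (2*i) + F (2*(i::nat)+1) :: 'b::comm_monoid_add)"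
proof (induction n)
  case (Suc n)
  have "{..<2*Suc n} = insert (2*n+1) (insert (2*n) {..<2*n})" by auto
  then show ?case using Suc by (simp add: add_ac)
qed simp

lemma psi_carrier[simp]: "psi n \<in> carrier_mat (2*n) (2*n)"
  by (simp add: psi_def)

lemma psi_entry: "a < 2*n \<Longrightarrow> b < 2*n \<Longrightarrow> psi n $$ (a,b) =
   (if even a \<and> b = a+1 then 1 else if odd a \<and> b+1 = a then -1 else 0)"
  by (simp add: psi_def)

lemma psi_left:
  assumes "A \<in> carrier_mat (2*n) c" "i < 2*n" "j < c"
  shows "(psi n * A) $$ (i,j) = (if even i then A $$ (i+1,j) else - A $$ (i-1,j))"
proof -
  have s: "(psi n * A) $$ (i,j) = (\<Sum>k<2*n. psi n $$ (i,k) * A $$ (k,j))"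
    by (rule mult_entry[OF psi_carrier assms])
  show ?thesis
  proof (cases "even i")
    case True
    hence lt: "i+1 < 2*n" using assms(2) by presburger
    have "(\<Sum>k<2*n. psi n $$ (i,k) * A $$ (k,j)) = (\<Sum>k<2*n. if k = i+1 then A $$ (i+1,j) else 0)"
      by (rule sum.cong) (use True assms in \<open>auto simp: psi_entry\<close>)
    then show ?thesis using s True lt by simp
  next
    case False
    hence lt: "i-1 < 2*n" "i \<ge> 1" using assms(2) by presburger+
    have "(\<Sum>k<2*n. psi n $$ (i,k) * A $$ (k,j)) = (\<Sum>k<2*n. if k = i-1 then - A $$ (i-1,j) else 0)"
      by (rule sum.cong) (use False assms lt in \<open>auto simp: psi_entry\<close>)
    then show ?thesis using s False lt by simp
  qed
qed

lemma psi_right: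
  assumes "A \<in> carrier_mat r (2*n)" "i < r" "j < 2*n"
  shows "(A * psi n) $$ (i,j) = (if odd j then A $$ (i,j-1) else - A $$ (i,j+1))"
proof -
  have s: "(A * psi n) $$ (i,j) = (\<Sum>k<2*n. A $$ (i,k) * psi n $$ (k,j))"
    by (rule mult_entry[OF assms(1) psi_carrier assms(2,3)])
  show ?thesis
  proof (cases "odd j")
    case True
    hence lt: "j-1 < 2*n" "j \<ge> 1" using assms(3) by presburger+
    have "(\<Sum>k<2*n. A $$ (i,k) * psi n $$ (k,j)) = (\<Sum>k<2*n. if k = j-1 then A $$ (i,j-1) else 0)"
      by (rule sum.cong) (use True assms lt in \<open>auto simp: psi_entry\<close>)
    then show ?thesis using s True lt by simp
  next
    case False
    hence lt: "j+1 < 2*n" using assms(3) by presburger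
    have "(\<Sum>k<2*n. A $$ (i,k) * psi n $$ (k,j)) = (\<Sum>k<2*n. if k = j+1 then - A $$ (i,j+1) else 0)"
      by (rule sum.cong) (use False assms lt in \<open>auto simp: psi_entry\<close>)
    then show ?thesis using s False lt by simp
  qed
qed

lemma psi_sq: "psi n * psi n = - 1\<^sub>m (2*n)"
proof (rule eq_matI)
  fix i j assume "i < dim_row (- 1\<^sub>m (2*n))" "j < dim_col (- 1\<^sub>m (2*n))"
  hence ij: "i < 2*n" "j < 2*n" by auto
  show "(psi n * psi n) $$ (i,j) = (- 1\<^sub>m (2*n)) $$ (i,j)"
  proof (cases "even i")
    case True
    hence "i+1 < 2*n" using ij by presburger
    then show ?thesis using True ij by (subst psi_left[OF psi_carrier ij]) (auto simp: psi_entry)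
  next
    case False
    hence "i-1 < 2*n" "i \<ge> 1" using ij by presburger+
    then show ?thesis using False ij by (subst psi_left[OF psi_carrier ij]) (auto simp: psi_entry)
  qed
qed (simp_all add: psi_def)

lemma psi_dim[simp]: "dim_row (psi n) = 2*n" "dim_col (psi n) = 2*n"
  by (simp_all add: psi_def)

lemma mat_inv_psi: "mat_inv (psi n) = - psi n"
proof -
  let ?P = "\<lambda>B. B \<in> carrier_mat (2*n) (2*n) \<and> psi n * B = 1\<^sub>m (2*n) \<and> B * psi n = 1\<^sub>m (2*n)"
  have m: "- psi n \<in> carrier_mat (2*n) (2*n)" by simp
  have P: "?P (- psi n)" using m by (simp add: psi_sq)
  have u: "B = - psi n" if "?P B" for B
  proof -
    have "B = 1\<^sub>m (2*n) * B" using that by (auto intro: left_mult_one_mat[symmetric])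
    also have "\<dots> = ((- psi n) * psi n) * B" using P by metis
    also have "\<dots> = (- psi n) * (psi n * B)" using that m by (intro assoc_mult_mat) auto
    also have "\<dots> = - psi n" using that m by simp
    finally show ?thesis .
  qed
  have "?P (mat_inv (psi n))" unfolding mat_inv_def psi_dim by (rule someI[of ?P, OF P])
  then show ?thesis by (rule u)
qed

lemma nu_right:
  assumes "X \<in> carrier_mat r (2*n-1)" "a < r" "b < 2*n-1"
  shows "(X * phi_nu (psi n)) $$ (a,b) = (if b = 0 then 0 else if even b then X $$ (a,b-1) else - X $$ (a,b+1))"
proof -
  have c: "phi_nu (psi n) \<in> carrier_mat (2*n-1) (2*n-1)" by (simp add: phi_nu_def)
  have s: "(X * phi_nu (psi n)) $$ (a,b) = (\<Sum>k<2*n-1. X $$ (a,k) * phi_nu (psi n) $$ (k,b))"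
    by (rule mult_entry[OF assms(1) c assms(2,3)])
  have e: "k < 2*n-1 \<Longrightarrow> c < 2*n-1 \<Longrightarrow> phi_nu (psi n) $$ (k,c) = psi n $$ (k+1,c+1)" for k c
    using assms by (simp add: phi_nu_def)
  consider "b = 0" | "b \<noteq> 0" "even b" | "odd b" by blast
  then show ?thesis
  proof cases
    case 1
    have "(\<Sum>k<2*n-1. X $$ (a,k) * phi_nu (psi n) $$ (k,b)) = (\<Sum>k<2*n-1. 0)"
      by (rule sum.cong) (use 1 assms in \<open>auto simp: e psi_entry\<close>)
    then show ?thesis using s 1 by simp
  next
    case 2
    have "(\<Sum>k<2*n-1. X $$ (a,k) * phi_nu (psi n) $$ (k,b)) = (\<Sum>k<2*n-1. if k = b-1 then X $$ (a,b-1) else 0)"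
      by (rule sum.cong) (use 2 assms in \<open>auto simp: e psi_entry\<close>)
    then show ?thesis using s 2 assms by simp
  next
    case 3
    have lt: "b+1 < 2*n-1" using 3 assms by presburger
    have "(\<Sum>k<2*n-1. X $$ (a,k) * phi_nu (psi n) $$ (k,b)) = (\<Sum>k<2*n-1. if k = b+1 then - X $$ (a,b+1) else 0)"
      by (rule sum.cong) (use 3 assms lt in \<open>auto simp: e psi_entry\<close>)
    moreover have "b \<noteq> 0" using 3 by presburger
    ultimately show ?thesis using s 3 lt by simp
  qed
qed

lemma mu_left:
  assumes "X \<in> carrier_mat (2*n-1) r" "a < 2*n-1" "b < r"
  shows "(phi_mu (psi n) * X) $$ (a,b) = - (if a = 0 then 0 else if odd a then X $$ (a+1,b) else - X $$ (a-1,b))"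
proof -
  have c: "phi_mu (psi n) \<in> carrier_mat (2*n-1) (2*n-1)" by (simp add: phi_mu_def)
  have s: "(phi_mu (psi n) * X) $$ (a,b) = (\<Sum>k<2*n-1. phi_mu (psi n) $$ (a,k) * X $$ (k,b))"
    by (rule mult_entry[OF c assms(1) assms(2,3)])
  have e: "k < 2*n-1 \<Longrightarrow> c < 2*n-1 \<Longrightarrow> phi_mu (psi n) $$ (c,k) = - psi n $$ (c+1,k+1)" for k c
    using assms by (simp add: phi_mu_def mat_inv_psi)
  consider "a = 0" | "odd a" | "a \<noteq> 0" "even a" by blast
  then show ?thesis
  proof cases
    case 1
    have "(\<Sum>k<2*n-1. phi_mu (psi n) $$ (a,k) * X $$ (k,b)) = (\<Sum>k<2*n-1. 0)"
      by (rule sum.cong) (use 1 assms in \<open>auto simp: e psi_entry\<close>)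
    then show ?thesis using s 1 by simp
  next
    case 2
    have lt: "a+1 < 2*n-1" using 2 assms by presburger
    have "(\<Sum>k<2*n-1. phi_mu (psi n) $$ (a,k) * X $$ (k,b)) = (\<Sum>k<2*n-1. if k = a+1 then - X $$ (a+1,b) else 0)"
      by (rule sum.cong) (use 2 assms lt in \<open>auto simp: e psi_entry\<close>)
    moreover have "a \<noteq> 0" using 2 by presburger
    ultimately show ?thesis using s 2 lt by simp
  next
    case 3
    have "(\<Sum>k<2*n-1. phi_mu (psi n) $$ (a,k) * X $$ (k,b)) = (\<Sum>k<2*n-1. if k = a-1 then X $$ (a-1,b) else 0)"
      by (rule sum.cong) (use 3 assms in \<open>auto simp: e psi_entry\<close>)
    then show ?thesis using s 3 assms by simp
  qed
qed

definition rowop :: "nat \<Rightarrow> 'a::comm_ring_1 vec \<Rightarrow> 'a mat" where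
  "rowop m y = mat m m (\<lambda>(a,b). (if a = b then 1 else 0) + (if a = 0 then y$b else 0))"
definition colop :: "nat \<Rightarrow> 'a::comm_ring_1 vec \<Rightarrow> 'a mat" where
  "colop m y = mat m m (\<lambda>(a,b). (if a = b then 1 else 0) + (if b = 0 then y$a else 0))"
definition vgen :: "nat \<Rightarrow> 'a::comm_ring_1 vec \<Rightarrow> 'a vec" where
  "vgen m y = vec m (\<lambda>j. if odd j then - y$(j+1) else y$(j-1))"

lemma rank1_carrier: "mat_of_cols m [x] * mat_of_rows m [v] \<in> carrier_mat m (m::nat)"
proof -
  have "mat_of_cols m [x] \<in> carrier_mat m 1" using mat_of_cols_carrier(1)[of m "[x]"] by simp
  moreover have "mat_of_rows m [v] \<in> carrier_mat 1 m" using mat_of_rows_carrier(1)[of m "[v]"] by simp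
  ultimately show ?thesis by (rule mult_carrier_mat)
qed

lemma rank1_entry:
  assumes "a < m" "k < m" "dim_vec x = m" "dim_vec v = m"
  shows "(mat_of_cols m [x] * mat_of_rows m [v]) $$ (a,k) = x$a * v$k"
proof -
  have "(mat_of_cols m [x] * mat_of_rows m [v]) $$ (a,k) = (\<Sum>l<1. mat_of_cols m [x] $$ (a,l) * mat_of_rows m [v] $$ (l,k))"
    by (rule mult_entry) (use assms in auto)
  then show ?thesis using assms by (simp add: mat_of_cols_index mat_of_rows_index)
qed


lemma alpha_eq:
  assumes "n \<ge> 1" "y \<in> carrier_vec (2*n-1)" "y$0 = 0"
  shows "alpha_phi (psi n) (vgen (2*n-1) y) = rowop (2*n-1) y"
proof -
  let ?m = "2*n-1"
  let ?v = "vgen ?m y"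
  let ?X = "mat_of_cols ?m [phi_d (psi n)] * mat_of_rows ?m [?v]"
  have X: "?X \<in> carrier_mat ?m ?m" by (rule rank1_carrier)
  have d: "a < ?m \<Longrightarrow> phi_d (psi n) $ a = (if a = 0 then -1 else 0)" for a
    using assms by (auto simp: phi_d_def mat_inv_psi psi_entry)
  have Xe: "a < ?m \<Longrightarrow> k < ?m \<Longrightarrow> ?X $$ (a,k) = (if a = 0 then -1 else 0) * ?v $ k" for a k
  proof -
    assume ak: "a < ?m" "k < ?m"
    have "dim_vec (phi_d (psi n)) = ?m" by (simp add: phi_d_def)
    then show ?thesis using ak by (subst rank1_entry) (auto simp: d vgen_def)
  qed
  show ?thesis
  proof (rule eq_matI)
    fix a b assume ab: "a < dim_row (rowop ?m y)" "b < dim_col (rowop ?m y)"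
    hence ab': "a < ?m" "b < ?m" by (auto simp: rowop_def)
    have "alpha_phi (psi n) ?v $$ (a,b) = (if a = b then 1 else 0) + (?X * phi_nu (psi n)) $$ (a,b)"
      using ab' by (simp add: alpha_phi_def Let_def phi_nu_def)
    also have "(?X * phi_nu (psi n)) $$ (a,b) = (if b = 0 then 0 else if even b then ?X $$ (a,b-1) else - ?X $$ (a,b+1))"
      by (rule nu_right[OF X ab'])
    also have "\<dots> = (if a = 0 then y$b else 0)"
    proof -
      consider "b = 0" | "b \<noteq> 0" "even b" | "odd b" by blast
      then show ?thesis
      proof cases
        case 3
        hence "b+1 < ?m" "b \<noteq> 0" "even (b+1)" using ab' by presburger+
        moreover have "?X $$ (a,b+1) = (if a = 0 then -1 else 0) * ?v $ (b+1)"
          using Xe ab' calculation by blast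
        ultimately show ?thesis using 3 ab' by (simp add: vgen_def)
      next
        case 1 then show ?thesis using assms(3) by simp
      next
        case 2
        hence "odd (b-1)" "b-1+1 = b" "b-1 < ?m" using ab' by presburger+
        moreover have "?X $$ (a,b-1) = (if a = 0 then -1 else 0) * ?v $ (b-1)"
          using Xe ab' calculation by blast
        ultimately show ?thesis using 2 ab' by (simp add: vgen_def)
      qed
    qed
    finally show "alpha_phi (psi n) ?v $$ (a,b) = rowop ?m y $$ (a,b)"
      using ab' by (simp add: rowop_def)
  next
    show "dim_row (alpha_phi (psi n) ?v) = dim_row (rowop ?m y)"
      unfolding alpha_phi_def Let_def index_add_mat(2) index_mult_mat(2) by (simp add: rowop_def)
  next
    show "dim_col (alpha_phi (psi n) ?v) = dim_col (rowop ?m y)"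
      unfolding alpha_phi_def Let_def index_add_mat(3) by (simp add: phi_nu_def rowop_def)
  qed
qed
lemma beta_eq:
  assumes "n \<ge> 1" "y \<in> carrier_vec (2*n-1)" "y$0 = 0"
  shows "beta_phi (psi n) (vgen (2*n-1) y) = colop (2*n-1) y"
proof -
  let ?m = "2*n-1"
  let ?v = "vgen ?m y"
  let ?P = "mat_of_cols ?m [?v]"
  let ?R = "mat_of_rows ?m [phi_c (psi n)]"
  have mu: "phi_mu (psi n) \<in> carrier_mat ?m ?m" by (simp add: phi_mu_def)
  have P: "?P \<in> carrier_mat ?m 1" using mat_of_cols_carrier(1)[of ?m "[?v]"] by simp
  have R: "?R \<in> carrier_mat 1 ?m" using mat_of_rows_carrier(1)[of ?m "[phi_c (psi n)]"] by simp
  have c: "b < ?m \<Longrightarrow> phi_c (psi n) $ b = (if b = 0 then -1 else 0)" for b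
    using assms by (auto simp: phi_c_def psi_entry)
  have dc: "dim_vec (phi_c (psi n)) = ?m" by (simp add: phi_c_def)
  have dv: "dim_vec ?v = ?m" by (simp add: vgen_def)
  have Re: "b < ?m \<Longrightarrow> ?R $$ (0,b) = (if b = 0 then -1 else 0)" for b
    using c[of b] dc by (simp add: mat_of_rows_index)
  have Pe: "a < ?m \<Longrightarrow> ?P $$ (a,0) = ?v $ a" for a
    using dv by (simp add: mat_of_cols_index)
  have MP: "(phi_mu (psi n) * ?P) $$ (a,0) = - (if a = 0 then 0 else if odd a then ?v $ (a+1) else - ?v $ (a-1))"
    if a: "a < ?m" for a
  proof -
    have "(phi_mu (psi n) * ?P) $$ (a,0) = - (if a = 0 then 0 else if odd a then ?P $$ (a+1,0) else - ?P $$ (a-1,0))"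
      by (rule mu_left[OF P a]) simp
    moreover have "odd a \<Longrightarrow> a+1 < ?m" using a by presburger
    ultimately show ?thesis using a Pe by auto
  qed
  have E: "(phi_mu (psi n) * ?P * ?R) $$ (a,b) = (phi_mu (psi n) * ?P) $$ (a,0) * ?R $$ (0,b)"
    if ab: "a < ?m" "b < ?m" for a b
  proof -
    have "(phi_mu (psi n) * ?P * ?R) $$ (a,b) = (\<Sum>k<1. (phi_mu (psi n) * ?P) $$ (a,k) * ?R $$ (k,b))"
      by (rule mult_entry[OF mult_carrier_mat[OF mu P] R ab])
    then show ?thesis by simp
  qed
  show ?thesis
  proof (rule eq_matI)
    fix a b assume ab: "a < dim_row (colop ?m y)" "b < dim_col (colop ?m y)"
    hence ab': "a < ?m" "b < ?m" by (auto simp: colop_def)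
    have "beta_phi (psi n) ?v $$ (a,b) = (if a = b then 1 else 0) + (phi_mu (psi n) * ?P * ?R) $$ (a,b)"
    proof -
      have Q: "phi_mu (psi n) * ?P * ?R \<in> carrier_mat ?m ?m" using mu P R by (meson mult_carrier_mat)
      show ?thesis using ab' Q unfolding beta_phi_def Let_def by (subst index_add_mat(1)) auto
    qed
    also have "(phi_mu (psi n) * ?P * ?R) $$ (a,b) = (if b = 0 then y$a else 0)"
    proof -
      have e1: "(phi_mu (psi n) * ?P * ?R) $$ (a,b) = - (if a = 0 then 0 else if odd a then ?v $ (a+1) else - ?v $ (a-1)) * (if b = 0 then -1 else 0)"
        unfolding E[OF ab'] MP[OF ab'(1)] Re[OF ab'(2)] by (rule refl)
      consider "a = 0" | "a \<noteq> 0" "even a" | "odd a" by blast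
      then show ?thesis
      proof cases
        case 1 then show ?thesis using e1 assms(3) by simp
      next
        case 2
        hence "odd (a-1)" "a-1+1 = a" "a-1 < ?m" using ab' by presburger+
        then show ?thesis using e1 2 ab' by (simp add: vgen_def)
      next
        case 3
        hence "a+1 < ?m" "a \<noteq> 0" "even (a+1)" using ab' by presburger+
        then show ?thesis using e1 3 ab' by (simp add: vgen_def)
      qed
    qed
    finally show "beta_phi (psi n) ?v $$ (a,b) = colop ?m y $$ (a,b)"
      using ab' by (simp add: colop_def)
  next
    show "dim_row (beta_phi (psi n) ?v) = dim_row (colop ?m y)"
      unfolding beta_phi_def Let_def index_add_mat(2) index_mult_mat(2) by (simp add: colop_def phi_mu_def)
  next
    show "dim_col (beta_phi (psi n) ?v) = dim_col (colop ?m y)"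
      unfolding beta_phi_def Let_def index_add_mat(3) by (simp add: colop_def)
  qed
qed

lemma mult_col2:
  assumes "A \<in> carrier_mat r K" "B \<in> carrier_mat K c" "i < r" "j < c" "p < K" "p' < K"
    "\<And>l. l < K \<Longrightarrow> B $$ (l,j) = (if l = p then \<beta> else 0) + (if l = p' then \<beta>' else 0)"
  shows "(A * B) $$ (i,j) = A $$ (i,p) * \<beta> + A $$ (i,p') * \<beta>'"
proof -
  have "(A * B) $$ (i,j) = (\<Sum>l<K. A $$ (i,l) * B $$ (l,j))" by (rule mult_entry[OF assms(1-4)])
  also have "\<dots> = (\<Sum>l<K. (if l = p then A $$ (i,p) * \<beta> else 0) + (if l = p' then A $$ (i,p') * \<beta>' else 0))"
    by (rule sum.cong) (auto simp: assms(7) ring_distribs)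
  also have "\<dots> = A $$ (i,p) * \<beta> + A $$ (i,p') * \<beta>'" using assms(5,6) by (simp add: sum.distrib)
  finally show ?thesis .
qed

lemma mult_row2:
  assumes "A \<in> carrier_mat r K" "B \<in> carrier_mat K c" "i < r" "j < c" "p < K" "p' < K"
    "\<And>l. l < K \<Longrightarrow> A $$ (i,l) = (if l = p then \<alpha> else 0) + (if l = p' then \<alpha>' else 0)"
  shows "(A * B) $$ (i,j) = \<alpha> * B $$ (p,j) + \<alpha>' * B $$ (p',j)"
proof -
  have "(A * B) $$ (i,j) = (\<Sum>l<K. A $$ (i,l) * B $$ (l,j))" by (rule mult_entry[OF assms(1-4)])
  also have "\<dots> = (\<Sum>l<K. (if l = p then \<alpha> * B $$ (p,j) else 0) + (if l = p' then \<alpha>' * B $$ (p',j) else 0))"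
    by (rule sum.cong) (auto simp: assms(7) ring_distribs)
  also have "\<dots> = \<alpha> * B $$ (p,j) + \<alpha>' * B $$ (p',j)" using assms(5,6) by (simp add: sum.distrib)
  finally show ?thesis .
qed

section \<open>generated groups\<close>

lemma assoc4:
  assumes "A \<in> carrier_mat m m" "g \<in> carrier_mat m m" "h \<in> carrier_mat m m" "B \<in> carrier_mat m m"
  shows "(A * g) * (h * B) = A * ((g * h) * B)"
proof -
  have "(A * g) * (h * B) = A * (g * (h * B))" using assms by (intro assoc_mult_mat) auto
  also have "g * (h * B) = (g * h) * B" using assms by (intro assoc_mult_mat[symmetric]) auto
  finally show ?thesis .
qed

lemma gen_group_carrier:
  assumes "gens \<subseteq> carrier_mat m m" "A \<in> gen_group m gens"
  shows "A \<in> carrier_mat m m"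
  using assms(2) by induction (use assms(1) in auto)

lemma gen_group_gen:
  assumes "gens \<subseteq> carrier_mat m m" "g \<in> gens"
  shows "g \<in> gen_group m gens"
proof -
  have "1\<^sub>m m * g \<in> gen_group m gens" by (rule gen_group.mult[OF gen_group.one assms(2)])
  then show ?thesis using assms by auto
qed

lemma gen_group_mult:
  assumes "gens \<subseteq> carrier_mat m m" "A \<in> gen_group m gens" "B \<in> gen_group m gens"
  shows "A * B \<in> gen_group m gens"
  using assms(3)
proof induction
  case one
  then show ?case using gen_group_carrier[OF assms(1,2)] assms(2) by simp
next
  case (mult B g)
  have "A * (B * g) = (A * B) * g"
    using gen_group_carrier[OF assms(1,2)] gen_group_carrier[OF assms(1) mult(1)] mult(2) assms(1)
    by (subst assoc_mult_mat[symmetric, of _ m m _ m _ m]) auto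
  then show ?case using gen_group.mult[OF mult(3,2)] by simp
next
  case (mult_inv B g h)
  have "A * (B * h) = (A * B) * h"
    using gen_group_carrier[OF assms(1,2)] gen_group_carrier[OF assms(1) mult_inv(1)] mult_inv(3)
    by (subst assoc_mult_mat[symmetric, of _ m m _ m _ m]) auto
  then show ?case using gen_group.mult_inv[OF mult_inv(6,2,3,4,5)] by simp
qed

lemma gen_group_inv:
  assumes "gens \<subseteq> carrier_mat m m"
    "\<And>g. g \<in> gens \<Longrightarrow> \<exists>h \<in> carrier_mat m m. g * h = 1\<^sub>m m \<and> h * g = 1\<^sub>m m"
    "A \<in> gen_group m gens"
  shows "\<exists>B \<in> carrier_mat m m. A * B = 1\<^sub>m m \<and> B * A = 1\<^sub>m m"
  using assms(3)
proof induction
  case one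
  then show ?case by (intro bexI[of _ "1\<^sub>m m"]) auto
next
  case (mult A g)
  obtain B where B: "B \<in> carrier_mat m m" "A * B = 1\<^sub>m m" "B * A = 1\<^sub>m m" using mult(3) by blast
  obtain h where h: "h \<in> carrier_mat m m" "g * h = 1\<^sub>m m" "h * g = 1\<^sub>m m" using assms(2)[OF mult(2)] by blast
  have A: "A \<in> carrier_mat m m" by (rule gen_group_carrier[OF assms(1) mult(1)])
  have g: "g \<in> carrier_mat m m" using assms(1) mult(2) by auto
  have 1: "(A * g) * (h * B) = 1\<^sub>m m"
  proof -
    have "(A * g) * (h * B) = A * ((g * h) * B)" by (rule assoc4[OF A g h(1) B(1)])
    then show ?thesis using h B A by simp
  qed
  have 2: "(h * B) * (A * g) = 1\<^sub>m m"
  proof -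
    have "(h * B) * (A * g) = h * ((B * A) * g)" by (rule assoc4[OF h(1) B(1) A g])
    then show ?thesis using h B g by simp
  qed
  show ?case using 1 2 h B by (intro bexI[of _ "h * B"]) auto
next
  case (mult_inv A g h)
  obtain B where B: "B \<in> carrier_mat m m" "A * B = 1\<^sub>m m" "B * A = 1\<^sub>m m" using mult_inv(6) by blast
  have A: "A \<in> carrier_mat m m" by (rule gen_group_carrier[OF assms(1) mult_inv(1)])
  have g: "g \<in> carrier_mat m m" using assms(1) mult_inv(2) by auto
  note h = mult_inv(3,4,5)
  have 1: "(A * h) * (g * B) = 1\<^sub>m m"
  proof -
    have "(A * h) * (g * B) = A * ((h * g) * B)" by (rule assoc4[OF A h(1) g B(1)])
    then show ?thesis using h B A by simp
  qed
  have 2: "(g * B) * (A * h) = 1\<^sub>m m"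
  proof -
    have "(g * B) * (A * h) = g * ((B * A) * h)" by (rule assoc4[OF g B(1) A h(1)])
    then show ?thesis using h B g by simp
  qed
  show ?case using 1 2 g B by (intro bexI[of _ "g * B"]) auto
qed

section \<open>Elementary matrices\<close>

lemma elem_carrier[simp]: "elem_mat m i j c \<in> carrier_mat m m"
  by (simp add: elem_mat_def)

lemma dims_ops[simp]: "dim_row (rowop m y) = m" "dim_col (rowop m y) = m"
  "dim_row (colop m y) = m" "dim_col (colop m y) = m"
  "dim_row (elem_mat m i j c) = m" "dim_col (elem_mat m i j c) = m"
  by (simp_all add: rowop_def colop_def elem_mat_def)

lemma elem_entry: "a < m \<Longrightarrow> b < m \<Longrightarrow> elem_mat m i j c $$ (a,b) =
   (if a = b then 1 else 0) + (if a = i \<and> b = j then c else 0)"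
  by (simp add: elem_mat_def)

lemma rowop_carrier[simp]: "rowop m y \<in> carrier_mat m m"
  by (simp add: rowop_def)
lemma colop_carrier[simp]: "colop m y \<in> carrier_mat m m"
  by (simp add: colop_def)
lemma rowop_entry: "a < m \<Longrightarrow> b < m \<Longrightarrow> rowop m y $$ (a,b) =
   (if a = b then 1 else 0) + (if a = 0 then y$b else 0)"
  by (simp add: rowop_def)
lemma colop_entry: "a < m \<Longrightarrow> b < m \<Longrightarrow> colop m y $$ (a,b) =
   (if a = b then 1 else 0) + (if b = 0 then y$a else 0)"
  by (simp add: colop_def)

lemma elem_inv:
  assumes "i < m" "j < m" "i \<noteq> j"
  shows "elem_mat m i j c * elem_mat m i j (-c) = 1\<^sub>m m"
proof (rule eq_matI)
  fix a b assume ab: "a < dim_row (1\<^sub>m m)" "b < dim_col (1\<^sub>m m)"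
  hence ab': "a < m" "b < m" by auto
  have "(elem_mat m i j c * elem_mat m i j (-c)) $$ (a,b) =
     elem_mat m i j c $$ (a,b) * 1 + elem_mat m i j c $$ (a,i) * (if b = j then -c else 0)"
    by (rule mult_col2[OF elem_carrier elem_carrier ab' ab'(2) assms(1)]) (use ab' in \<open>auto simp: elem_entry\<close>)
  then show "(elem_mat m i j c * elem_mat m i j (-c)) $$ (a,b) = 1\<^sub>m m $$ (a,b)"
    using ab' assms by (auto simp: elem_entry)
qed (auto simp: elem_mat_def)

lemma Elem_gens_carrier: "{elem_mat m i j lam | i j lam. i < m \<and> j < m \<and> i \<noteq> j} \<subseteq> carrier_mat m m"
  by auto

lemma Elem_gens_inv: "g \<in> {elem_mat m i j lam | i j lam. i < m \<and> j < m \<and> i \<noteq> j} \<Longrightarrow>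
    \<exists>h \<in> carrier_mat m m. g * h = 1\<^sub>m m \<and> h * g = 1\<^sub>m m"
proof -
  assume "g \<in> {elem_mat m i j lam | i j lam. i < m \<and> j < m \<and> i \<noteq> j}"
  then obtain i j c where g: "g = elem_mat m i j c" "i < m" "j < m" "i \<noteq> j" by blast
  show ?thesis using elem_inv[OF g(2-4), of c] elem_inv[OF g(2-4), of "-c"] g(1)
    by (intro bexI[of _ "elem_mat m i j (-c)"]) auto
qed

lemma Elem_carrier: "A \<in> Elem m \<Longrightarrow> A \<in> carrier_mat m m"
  unfolding Elem_def by (rule gen_group_carrier[OF Elem_gens_carrier])

lemma Elem_mult: "A \<in> Elem m \<Longrightarrow> B \<in> Elem m \<Longrightarrow> A * B \<in> Elem m"
  unfolding Elem_def by (rule gen_group_mult[OF Elem_gens_carrier])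

lemma Elem_inv: "A \<in> Elem m \<Longrightarrow> \<exists>B \<in> carrier_mat m m. A * B = 1\<^sub>m m \<and> B * A = 1\<^sub>m m"
  unfolding Elem_def by (rule gen_group_inv[OF Elem_gens_carrier Elem_gens_inv])

lemma Elem_elem: "i < m \<Longrightarrow> j < m \<Longrightarrow> i \<noteq> j \<Longrightarrow> elem_mat m i j c \<in> Elem m"
  unfolding Elem_def by (rule gen_group_gen[OF Elem_gens_carrier]) blast

lemma Elem_one: "1\<^sub>m m \<in> Elem m"
  unfolding Elem_def by (rule gen_group.one)

definition vtrunc :: "nat \<Rightarrow> 'a::comm_ring_1 vec \<Rightarrow> 'a vec" where
  "vtrunc k y = vec (dim_vec y) (\<lambda>b. if b < k then y$b else 0)"

lemma rowop_Elem:
  assumes "y \<in> carrier_vec m" "y$0 = 0"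
  shows "rowop m y \<in> Elem m"
proof -
  have "rowop m (vtrunc k y) \<in> Elem m" for k
  proof (induction k)
    case 0
    have "rowop m (vtrunc 0 y) = 1\<^sub>m m" using assms by (intro eq_matI) (auto simp: rowop_def vtrunc_def)
    then show ?case using Elem_one by simp
  next
    case (Suc k)
    show ?case
    proof (cases "k \<noteq> 0 \<and> k < m")
      case False
      hence "rowop m (vtrunc (Suc k) y) = rowop m (vtrunc k y)"
        using assms by (intro eq_matI) (auto simp: rowop_def vtrunc_def less_Suc_eq)
      then show ?thesis using Suc by simp
    next
      case True
      have "rowop m (vtrunc (Suc k) y) = rowop m (vtrunc k y) * elem_mat m 0 k (y$k)"
      proof (rule eq_matI)
        fix a b assume ab: "a < dim_row (rowop m (vtrunc k y) * elem_mat m 0 k (y$k))"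
          "b < dim_col (rowop m (vtrunc k y) * elem_mat m 0 k (y$k))"
        hence ab': "a < m" "b < m" by auto
        have "(rowop m (vtrunc k y) * elem_mat m 0 k (y$k)) $$ (a,b) =
          rowop m (vtrunc k y) $$ (a,b) * 1 + rowop m (vtrunc k y) $$ (a,0) * (if b = k then y$k else 0)"
          by (rule mult_col2[OF rowop_carrier elem_carrier ab' ab'(2)]) (use ab' in \<open>auto simp: elem_entry\<close>)
        then show "rowop m (vtrunc (Suc k) y) $$ (a,b) = (rowop m (vtrunc k y) * elem_mat m 0 k (y$k)) $$ (a,b)"
          using ab' assms True by (auto simp: rowop_entry vtrunc_def less_Suc_eq)
      qed auto
      then show ?thesis using Elem_mult[OF Suc.IH Elem_elem[of 0 m k "y$k"]] True by simp
    qed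
  qed
  moreover have "vtrunc m y = y" using assms by (intro eq_vecI) (auto simp: vtrunc_def)
  ultimately show ?thesis by metis
qed

lemma colop_Elem:
  assumes "y \<in> carrier_vec m" "y$0 = 0"
  shows "colop m y \<in> Elem m"
proof -
  have "colop m (vtrunc k y) \<in> Elem m" for k
  proof (induction k)
    case 0
    have "colop m (vtrunc 0 y) = 1\<^sub>m m" using assms by (intro eq_matI) (auto simp: colop_def vtrunc_def)
    then show ?case using Elem_one by simp
  next
    case (Suc k)
    show ?case
    proof (cases "k \<noteq> 0 \<and> k < m")
      case False
      hence "colop m (vtrunc (Suc k) y) = colop m (vtrunc k y)"
        using assms by (intro eq_matI) (auto simp: colop_def vtrunc_def less_Suc_eq)
      then show ?thesis using Suc by simp
    next
      case True
      have "colop m (vtrunc (Suc k) y) = colop m (vtrunc k y) * elem_mat m k 0 (y$k)"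
      proof (rule eq_matI)
        fix a b assume ab: "a < dim_row (colop m (vtrunc k y) * elem_mat m k 0 (y$k))"
          "b < dim_col (colop m (vtrunc k y) * elem_mat m k 0 (y$k))"
        hence ab': "a < m" "b < m" by auto
        have "(colop m (vtrunc k y) * elem_mat m k 0 (y$k)) $$ (a,b) =
          colop m (vtrunc k y) $$ (a,b) * 1 + colop m (vtrunc k y) $$ (a,k) * (if b = 0 then y$k else 0)"
          by (rule mult_col2[OF colop_carrier elem_carrier ab' ab'(2)]) (use ab' True in \<open>auto simp: elem_entry\<close>)
        then show "colop m (vtrunc (Suc k) y) $$ (a,b) = (colop m (vtrunc k y) * elem_mat m k 0 (y$k)) $$ (a,b)"
          using ab' assms True by (auto simp: colop_entry vtrunc_def less_Suc_eq)
      qed auto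
      then show ?thesis using Elem_mult[OF Suc.IH Elem_elem[of k m 0 "y$k"]] True by simp
    qed
  qed
  moreover have "vtrunc m y = y" using assms by (intro eq_vecI) (auto simp: vtrunc_def)
  ultimately show ?thesis by metis
qed

lemma mult_elem_right:
  assumes "X \<in> carrier_mat m m" "a < m" "b < m" "p < m" "q < m"
  shows "(X * elem_mat m p q d) $$ (a,b) = X $$ (a,b) + (if b = q then X $$ (a,p) * d else 0)"
proof -
  have "(X * elem_mat m p q d) $$ (a,b) = X $$ (a,b) * 1 + X $$ (a,p) * (if b = q then d else 0)"
    by (rule mult_col2[OF assms(1) elem_carrier assms(2,3,3,4)]) (use assms in \<open>auto simp: elem_entry\<close>)
  then show ?thesis by simp
qed

section \<open>E_phi\<close>

lemma alpha_carrier: "alpha_phi (psi n) v \<in> carrier_mat (2*n-1) (2*n-1)"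
proof -
  have "dim_row (alpha_phi (psi n) v) = 2*n-1"
    unfolding alpha_phi_def Let_def index_add_mat(2) index_mult_mat(2) by simp
  moreover have "dim_col (alpha_phi (psi n) v) = 2*n-1"
    unfolding alpha_phi_def Let_def index_add_mat(3) by (simp add: phi_nu_def)
  ultimately show ?thesis by auto
qed

lemma beta_carrier: "beta_phi (psi n) v \<in> carrier_mat (2*n-1) (2*n-1)"
proof -
  have "dim_row (beta_phi (psi n) v) = 2*n-1"
    unfolding beta_phi_def Let_def index_add_mat(2) index_mult_mat(2) by (simp add: phi_mu_def)
  moreover have "dim_col (beta_phi (psi n) v) = 2*n-1"
    unfolding beta_phi_def Let_def index_add_mat(3) by simp
  ultimately show ?thesis by auto
qed

lemma Ephi_gens_carrier: "({alpha_phi (psi n) v | v. v \<in> carrier_vec (dim_row (psi n) - 1)} \<union>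
      {beta_phi (psi n) v | v. v \<in> carrier_vec (dim_row (psi n) - 1)}) \<subseteq> carrier_mat (dim_row (psi n) - 1) (dim_row (psi n) - 1)"
  using alpha_carrier beta_carrier by auto

lemma Ephi_mult: "A \<in> E_phi (psi n) \<Longrightarrow> B \<in> E_phi (psi n) \<Longrightarrow> A * B \<in> E_phi (psi n)"
  unfolding E_phi_def by (rule gen_group_mult[OF Ephi_gens_carrier])

lemma Ephi_one: "1\<^sub>m (2*n-1) \<in> E_phi (psi n)"
  unfolding E_phi_def using gen_group.one by simp

lemma Ephi_carrier: "A \<in> E_phi (psi n) \<Longrightarrow> A \<in> carrier_mat (2*n-1) (2*n-1)"
  unfolding E_phi_def using gen_group_carrier[OF Ephi_gens_carrier] by simp

lemma rowop_Ephi: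
  assumes "n \<ge> 1" "y \<in> carrier_vec (2*n-1)" "y$0 = 0"
  shows "rowop (2*n-1) y \<in> E_phi (psi n)"
proof -
  have v: "vgen (2*n-1) y \<in> carrier_vec (2*n-1)" by (simp add: vgen_def)
  show ?thesis unfolding alpha_eq[OF assms, symmetric] E_phi_def
    by (rule gen_group_gen[OF Ephi_gens_carrier]) (use v in auto)
qed

lemma colop_Ephi:
  assumes "n \<ge> 1" "y \<in> carrier_vec (2*n-1)" "y$0 = 0"
  shows "colop (2*n-1) y \<in> E_phi (psi n)"
proof -
  have v: "vgen (2*n-1) y \<in> carrier_vec (2*n-1)" by (simp add: vgen_def)
  show ?thesis unfolding beta_eq[OF assms, symmetric] E_phi_def
    by (rule gen_group_gen[OF Ephi_gens_carrier]) (use v in auto)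
qed

definition unitv :: "nat \<Rightarrow> nat \<Rightarrow> 'a::comm_ring_1 \<Rightarrow> 'a vec" where
  "unitv m j c = vec m (\<lambda>b. if b = j then c else 0)"

lemma elem_row: "j < m \<Longrightarrow> j \<noteq> 0 \<Longrightarrow> elem_mat m 0 j c = rowop m (unitv m j c)"
  by (intro eq_matI) (auto simp: elem_entry rowop_entry unitv_def)

lemma elem_col: "i < m \<Longrightarrow> i \<noteq> 0 \<Longrightarrow> elem_mat m i 0 c = colop m (unitv m i c)"
  by (intro eq_matI) (auto simp: elem_entry colop_entry unitv_def)

lemma elem_comm:
  assumes "i < m" "j < m" "i \<noteq> 0" "j \<noteq> 0" "i \<noteq> j"
  shows "elem_mat m i j c = elem_mat m i 0 c * elem_mat m 0 j 1 * elem_mat m i 0 (-c) * elem_mat m 0 j (-1)"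
proof (rule eq_matI)
  fix a b assume ab: "a < dim_row (elem_mat m i 0 c * elem_mat m 0 j 1 * elem_mat m i 0 (-c) * elem_mat m 0 j (-1))"
    "b < dim_col (elem_mat m i 0 c * elem_mat m 0 j 1 * elem_mat m i 0 (-c) * elem_mat m 0 j (-1))"
  hence ab': "a < m" "b < m" by auto
  have z: "0 < m" using assms by auto
  have c1: "elem_mat m i 0 c * elem_mat m 0 j 1 \<in> carrier_mat m m" by (meson mult_carrier_mat elem_carrier)
  have c2: "elem_mat m i 0 c * elem_mat m 0 j 1 * elem_mat m i 0 (-c) \<in> carrier_mat m m" by (meson mult_carrier_mat elem_carrier c1)
  have e1: "(elem_mat m i 0 c * elem_mat m 0 j 1) $$ (a',b') =
      (if a' = b' then 1 else 0) + (if a' = i \<and> b' = 0 then c else 0) + (if a' = 0 \<and> b' = j then 1 else 0) + (if a' = i \<and> b' = j then c else 0)"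
    if "a' < m" "b' < m" for a' b'
    using that assms z by (subst mult_elem_right) (auto simp: elem_entry)
  have e2: "(elem_mat m i 0 c * elem_mat m 0 j 1 * elem_mat m i 0 (-c)) $$ (a',b') =
      (if a' = b' then 1 else 0) + (if a' = 0 \<and> b' = j then 1 else 0) + (if a' = i \<and> b' = j then c else 0)"
    if "a' < m" "b' < m" for a' b'
    using that assms z by (subst mult_elem_right[OF c1]) (auto simp: e1 simp del: index_mult_mat)
  show "elem_mat m i j c $$ (a,b) = (elem_mat m i 0 c * elem_mat m 0 j 1 * elem_mat m i 0 (-c) * elem_mat m 0 j (-1)) $$ (a,b)"
    using ab' assms z by (subst mult_elem_right[OF c2]) (auto simp: e2 elem_entry simp del: index_mult_mat)
qed auto

lemma elem_Ephi:
  assumes "n \<ge> 1" "i < 2*n-1" "j < 2*n-1" "i \<noteq> j"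
  shows "elem_mat (2*n-1) i j c \<in> E_phi (psi n)"
proof -
  have u: "unitv (2*n-1) k d \<in> carrier_vec (2*n-1)" for k d by (simp add: unitv_def)
  have u0: "k \<noteq> 0 \<Longrightarrow> unitv (2*n-1) k d $ 0 = 0" for k d using assms by (simp add: unitv_def)
  have R: "k \<noteq> 0 \<Longrightarrow> k < 2*n-1 \<Longrightarrow> elem_mat (2*n-1) 0 k d \<in> E_phi (psi n)" for k d
    using elem_row rowop_Ephi[OF assms(1) u u0] by metis
  have C: "k \<noteq> 0 \<Longrightarrow> k < 2*n-1 \<Longrightarrow> elem_mat (2*n-1) k 0 d \<in> E_phi (psi n)" for k d
    using elem_col colop_Ephi[OF assms(1) u u0] by metis
  consider "i = 0" | "j = 0" | "i \<noteq> 0" "j \<noteq> 0" by blast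
  then show ?thesis
  proof cases
    case 1 then show ?thesis using R assms by auto
  next
    case 2 then show ?thesis using C assms by auto
  next
    case 3
    show ?thesis unfolding elem_comm[OF assms(2,3) 3 assms(4)]
      using R C assms 3 Ephi_mult by metis
  qed
qed

lemma one_perp_carrier: "A \<in> carrier_mat m m \<Longrightarrow> one_perp A \<in> carrier_mat (Suc m) (Suc m)"
  by (auto simp: one_perp_def)

lemma one_perp_entry: "A \<in> carrier_mat m m \<Longrightarrow> a < Suc m \<Longrightarrow> b < Suc m \<Longrightarrow> one_perp A $$ (a,b) =
  (if a = 0 \<and> b = 0 then 1 else if a = 0 \<or> b = 0 then 0 else A $$ (a-1,b-1))"
  by (auto simp: one_perp_def)

lemma one_perp_mult:
  assumes A: "A \<in> carrier_mat m m" and B: "B \<in> carrier_mat m m"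
  shows "one_perp A * one_perp B = one_perp (A * B)"
proof (rule eq_matI)
  have AB: "A * B \<in> carrier_mat m m" using A B by simp
  fix a b assume ab: "a < dim_row (one_perp (A * B))" "b < dim_col (one_perp (A * B))"
  hence ab': "a < Suc m" "b < Suc m" using AB by (auto simp: one_perp_def)
  have "(one_perp A * one_perp B) $$ (a,b) = (\<Sum>k<Suc m. one_perp A $$ (a,k) * one_perp B $$ (k,b))"
    by (rule mult_entry[OF one_perp_carrier[OF A] one_perp_carrier[OF B] ab'])
  also have "\<dots> = one_perp A $$ (a,0) * one_perp B $$ (0,b) + (\<Sum>k<m. one_perp A $$ (a,Suc k) * one_perp B $$ (Suc k,b))"
    by (rule sum.lessThan_Suc_shift)
  also have "\<dots> = one_perp (A * B) $$ (a,b)"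
  proof (cases "a = 0 \<or> b = 0")
    case True
    then show ?thesis using ab' by (auto simp: one_perp_entry[OF A] one_perp_entry[OF B] one_perp_entry[OF AB])
  next
    case False
    have "(A * B) $$ (a-1,b-1) = (\<Sum>k<m. A $$ (a-1,k) * B $$ (k,b-1))"
      by (rule mult_entry[OF A B]) (use ab' False in auto)
    then show ?thesis using ab' False by (auto simp: one_perp_entry[OF A] one_perp_entry[OF B] one_perp_entry[OF AB])
  qed
  finally show "(one_perp A * one_perp B) $$ (a,b) = one_perp (A * B) $$ (a,b)" .
qed (use assms in \<open>auto simp: one_perp_def\<close>)

lemma one_perp_one: "one_perp (1\<^sub>m m) = 1\<^sub>m (Suc m)"
  by (intro eq_matI) (auto simp: one_perp_def)

lemma elem_perp: "i < m \<Longrightarrow> j < m \<Longrightarrow> elem_mat (Suc m) (Suc i) (Suc j) c = one_perp (elem_mat m i j c)"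
  by (intro eq_matI) (auto simp: one_perp_def elem_entry)

lemma sum_psi_r:
  assumes "b < 2*n"
  shows "(\<Sum>k<2*n. f k * psi n $$ (k,b)) = (if odd b then f (b-1) else - f (b+1))"
proof (cases "odd b")
  case True
  hence lt: "b-1 < 2*n" "b \<ge> 1" using assms by presburger+
  have "(\<Sum>k<2*n. f k * psi n $$ (k,b)) = (\<Sum>k<2*n. if k = b-1 then f (b-1) else 0)"
    by (rule sum.cong) (use True assms lt in \<open>auto simp: psi_entry\<close>)
  then show ?thesis using True lt by simp
next
  case False
  hence lt: "b+1 < 2*n" using assms by presburger
  have "(\<Sum>k<2*n. f k * psi n $$ (k,b)) = (\<Sum>k<2*n. if k = b+1 then - f (b+1) else 0)"
    by (rule sum.cong) (use False assms lt in \<open>auto simp: psi_entry\<close>)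
  then show ?thesis using False lt by simp
qed

lemma alt_zero: "(\<Sum>k<2*n. (if even k then f (k+1) else - f (k-1)) * f k) = (0::'a::comm_ring_1)"
  for f :: "nat \<Rightarrow> 'a::comm_ring_1" and n :: nat
  unfolding pair_sum by (rule sum.neutral) (auto simp: mult.commute)

lemma symp_entry:
  assumes S: "S \<in> carrier_mat (2*n) (2*n)" and ab: "a < 2*n" "b < 2*n"
  shows "(transpose_mat S * psi n * S) $$ (a,b) =
    (\<Sum>k<2*n. S $$ (k,a) * (if even k then S $$ (k+1,b) else - S $$ (k-1,b)))"
proof -
  have T: "transpose_mat S \<in> carrier_mat (2*n) (2*n)" using S by simp
  have "transpose_mat S * psi n * S = transpose_mat S * (psi n * S)"
    using S T by (intro assoc_mult_mat) auto
  moreover have "(transpose_mat S * (psi n * S)) $$ (a,b) = (\<Sum>k<2*n. transpose_mat S $$ (a,k) * (psi n * S) $$ (k,b))"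
    by (rule mult_entry[OF T mult_carrier_mat[OF psi_carrier S] ab])
  moreover have "\<And>k. k < 2*n \<Longrightarrow> transpose_mat S $$ (a,k) * (psi n * S) $$ (k,b) =
      S $$ (k,a) * (if even k then S $$ (k+1,b) else - S $$ (k-1,b))"
    using S ab by (subst psi_left[OF S]) auto
  ultimately show ?thesis by simp
qed

section \<open>row decomposition\<close>

lemma row_dec:
  fixes w :: "'a::comm_ring_1 vec"
  assumes n: "n \<ge> 1" and w: "w \<in> carrier_vec (2*n)" "w$0 = 0"
  shows "\<exists>S y. S \<in> carrier_mat (2*n) (2*n) \<and> transpose_mat S * psi n * S = psi n \<and>
     y \<in> carrier_vec (2*n-1) \<and> y$0 = 0 \<and> rowop (2*n) w = S * one_perp (colop (2*n-1) y)"
proof -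
  define N where "N = 2*n"
  define q where "q k = (if even k then w$(k+1) else - w$(k-1))" for k
  define z where "z k = (if k = 0 then 0 else - q k)" for k
  define c where "c = - q 0 - (\<Sum>k<N. w$k * z k)"
  define Sf where "Sf a b = (if a = b then 1 else 0) + (if a = 0 then w$b else 0) + (if b = 1 then q a else 0) + (if a = 0 \<and> b = 1 then c else 0)" for a b
  define S where "S = mat N N (\<lambda>(a,b). Sf a b)"
  define y where "y = vec (2*n-1) (\<lambda>a. z (a+1))"
  define H where "H = one_perp (colop (2*n-1) y)"
  define G where "G k b = - (if b = 1 then w$k else 0) - (if k = 1 then w$b + (if b = 1 then c else 0) else 0)" for k b
  have N1: "1 < N" using n by (simp add: N_def)
  have SN: "Suc (2*n-1) = N" using n N_def by simp
  have Sc: "S \<in> carrier_mat N N" by (simp add: S_def)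
  have Se: "a < N \<Longrightarrow> b < N \<Longrightarrow> S $$ (a,b) = Sf a b" for a b by (simp add: S_def)
  have q1: "q 1 = 0" using w by (simp add: q_def)
  have z1: "z 1 = 0" "z 0 = 0" using q1 by (simp_all add: z_def)
  have Hc: "H \<in> carrier_mat N N" unfolding H_def using one_perp_carrier[OF colop_carrier, of "2*n-1" y] SN by simp
  have He: "H $$ (a,b) = (if a = b then 1 else 0) + (if b = 1 then z a else 0)" if ab: "a < N" "b < N" for a b
  proof -
    have ab': "a < Suc (2*n-1)" "b < Suc (2*n-1)" using ab SN by auto
    show ?thesis unfolding H_def one_perp_entry[OF colop_carrier ab']
      using ab z1 SN by (auto simp: colop_entry y_def)
  qed
  have SH: "S * H = rowop N w"
  proof (rule eq_matI)
    fix a b assume "a < dim_row (rowop N w)" "b < dim_col (rowop N w)"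
    hence ab: "a < N" "b < N" by auto
    have "(S * H) $$ (a,b) = (\<Sum>k<N. S $$ (a,k) * H $$ (k,b))" by (rule mult_entry[OF Sc Hc ab])
    also have "\<dots> = (\<Sum>k<N. (if k = b then Sf a b else 0) + (if b = 1 then (if k = a then z a else 0) + (if a = 0 then w$k * z k else 0) else 0))"
      by (rule sum.cong) (use ab z1 in \<open>auto simp: Se He Sf_def ring_distribs\<close>)
    also have "\<dots> = Sf a b + (if b = 1 then z a + (if a = 0 then (\<Sum>k<N. w$k * z k) else 0) else 0)"
      using ab by (cases "b = 1"; cases "a = 0") (simp_all add: sum.distrib)
    also have "\<dots> = rowop N w $$ (a,b)"
      using ab by (auto simp: Sf_def rowop_entry c_def z_def)
    finally show "(S * H) $$ (a,b) = rowop N w $$ (a,b)" .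
  qed (use Sc Hc in auto)
  have F: "(if even k then S $$ (k+1,b) else - S $$ (k-1,b)) = psi n $$ (k,b) + G k b"
    if kb: "k < N" "b < N" for k b
  proof (cases "even k")
    case True
    hence "k+1 < N" using kb N_def by presburger
    then show ?thesis using True kb by (auto simp: Se Sf_def q_def G_def psi_entry N_def)
  next
    case False
    hence h: "k-1 < N" "k \<ge> 1" "even (k-1)" "k - 1 + 1 = k" using kb N_def by presburger+
    show ?thesis
    proof (cases "k = 1")
      case True
      have "S $$ (0,b) = Sf 0 b" using Se kb N1 by simp
      moreover have "psi n $$ (1,b) = (if b = 0 then -1 else 0)" using kb N1 by (simp add: psi_entry N_def)
      ultimately show ?thesis using True by (cases "b = 0"; cases "b = 1") (simp_all add: Sf_def q_def G_def)
    next
      case k1: False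
      have k0: "k - 1 \<noteq> 0" using h(2) k1 by arith
      have e1: "(if even k then S $$ (k+1,b) else - S $$ (k-1,b)) = - Sf (k-1) b" using Se kb h False by simp
      have e2: "psi n $$ (k,b) = (if b = k - 1 then -1 else 0)" using kb False h by (auto simp: psi_entry N_def)
      have e3: "q (k-1) = w$k" using h by (simp add: q_def)
      have e4: "G k b = - (if b = 1 then w$k else 0)" using k1 by (simp add: G_def)
      show ?thesis unfolding e1 e2 e4 using e3 k0 by (simp add: Sf_def)
    qed
  qed
  have symp: "transpose_mat S * psi n * S = psi n"
  proof (rule eq_matI)
    fix a b assume "a < dim_row (psi n)" "b < dim_col (psi n)"
    hence ab: "a < N" "b < N" by (auto simp: N_def)
    have "(transpose_mat S * psi n * S) $$ (a,b) = (\<Sum>k<N. S $$ (k,a) * (if even k then S $$ (k+1,b) else - S $$ (k-1,b)))"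
      using Sc ab unfolding N_def by (intro symp_entry) auto
    also have "\<dots> = (\<Sum>k<N. S $$ (k,a) * (psi n $$ (k,b) + G k b))"
    proof (rule sum.cong)
      fix k assume "k \<in> {..<N}"
      hence k: "k < N" by simp
      show "S $$ (k,a) * (if even k then S $$ (k+1,b) else - S $$ (k-1,b)) = S $$ (k,a) * (psi n $$ (k,b) + G k b)"
        unfolding F[OF k ab(2)] by (rule refl)
    qed simp
    also have "\<dots> = (\<Sum>k<N. (if k = a then psi n $$ (a,b) + G a b else 0) +
        (if k = 0 then (w$a + (if a = 1 then c else 0)) * (psi n $$ (0,b) + G 0 b) else 0) +
        (if a = 1 then q k * psi n $$ (k,b) + q k * G k b else 0))"
      by (rule sum.cong) (use ab in \<open>auto simp: Se Sf_def ring_distribs\<close>)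
    also have "\<dots> = psi n $$ (a,b) + G a b + (w$a + (if a = 1 then c else 0)) * (psi n $$ (0,b) + G 0 b) +
        (if a = 1 then (\<Sum>k<N. q k * psi n $$ (k,b)) + (\<Sum>k<N. q k * G k b) else 0)"
      using ab N1 by (cases "a = 1") (simp_all add: sum.distrib)
    also have "(\<Sum>k<N. q k * psi n $$ (k,b)) = w$b"
    proof -
      have "(\<Sum>k<N. q k * psi n $$ (k,b)) = (if odd b then q (b-1) else - q (b+1))"
        using ab unfolding N_def by (intro sum_psi_r) auto
      moreover have "odd b \<Longrightarrow> even (b-1) \<and> b - 1 + 1 = b" by presburger
      ultimately show ?thesis by (auto simp: q_def)
    qed
    also have "(\<Sum>k<N. q k * G k b) = 0"
    proof -
      have "(\<Sum>k<N. q k * G k b) = (\<Sum>k<N. - (if b = 1 then q k * w$k else 0))"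
      proof (rule sum.cong)
        fix k assume "k \<in> {..<N}"
        show "q k * G k b = - (if b = 1 then q k * w$k else 0)"
        proof (cases "k = 1")
          case True then show ?thesis using q1 by (simp add: G_def)
        qed (simp add: G_def ring_distribs)
      qed simp
      also have "\<dots> = - (if b = 1 then (\<Sum>k<N. q k * w$k) else 0)"
        by (cases "b = 1") (simp_all add: sum_negf)
      also have "(\<Sum>k<N. q k * w$k) = 0" unfolding N_def q_def by (rule alt_zero)
      finally show ?thesis by simp
    qed
    also have "psi n $$ (0,b) + G 0 b = (if b = 1 then 1 else 0)"
      using ab w N1 by (auto simp: G_def psi_entry N_def)
    finally show "(transpose_mat S * psi n * S) $$ (a,b) = psi n $$ (a,b)"
      by (auto simp: G_def)
  qed (use Sc in \<open>auto simp: N_def\<close>)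
  have y: "y \<in> carrier_vec (2*n-1)" "y$0 = 0" using n z1 by (auto simp: y_def)
  show ?thesis using Sc symp y SH by (intro exI[of _ S] exI[of _ y]) (simp add: H_def N_def)
qed

lemma col_dec:
  fixes u :: "'a::comm_ring_1 vec"
  assumes n: "n \<ge> 1" and u: "u \<in> carrier_vec (2*n)" "u$0 = 0"
  shows "\<exists>S y. S \<in> carrier_mat (2*n) (2*n) \<and> transpose_mat S * psi n * S = psi n \<and>
     y \<in> carrier_vec (2*n-1) \<and> y$0 = 0 \<and> colop (2*n) u = S * one_perp (rowop (2*n-1) y)"
proof -
  define N where "N = 2*n"
  define r where "r k = (if even k then u$(k+1) else - u$(k-1))" for k
  define z where "z k = (if k = 0 then 0 else - r k)" for k
  define c where "c = - r 0"
  define Sf where "Sf a b = (if a = b then 1 else 0) + (if b = 0 then u$a else 0) + (if a = 1 then r b else 0) + (if a = 1 \<and> b = 0 then c else 0)" for a b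
  define S where "S = mat N N (\<lambda>(a,b). Sf a b)"
  define y where "y = vec (2*n-1) (\<lambda>b. z (b+1))"
  define H where "H = one_perp (rowop (2*n-1) y)"
  define G where "G k b = (if b = 0 then r k else 0) + (if k = 0 then r b + (if b = 0 then c else 0) else 0)" for k b
  have N1: "1 < N" using n by (simp add: N_def)
  have SN: "Suc (2*n-1) = N" using n N_def by simp
  have Sc: "S \<in> carrier_mat N N" by (simp add: S_def)
  have Se: "a < N \<Longrightarrow> b < N \<Longrightarrow> S $$ (a,b) = Sf a b" for a b by (simp add: S_def)
  have r1: "r 1 = 0" using u by (simp add: r_def)
  have z1: "z 1 = 0" "z 0 = 0" using r1 by (simp_all add: z_def)
  have Hc: "H \<in> carrier_mat N N" unfolding H_def using one_perp_carrier[OF rowop_carrier, of "2*n-1" y] SN by simp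
  have He: "H $$ (a,b) = (if a = b then 1 else 0) + (if a = 1 then z b else 0)" if ab: "a < N" "b < N" for a b
  proof -
    have ab': "a < Suc (2*n-1)" "b < Suc (2*n-1)" using ab SN by auto
    show ?thesis unfolding H_def one_perp_entry[OF rowop_carrier ab']
      using ab z1 SN by (auto simp: rowop_entry y_def)
  qed
  have SH: "S * H = colop N u"
  proof (rule eq_matI)
    fix a b assume "a < dim_row (colop N u)" "b < dim_col (colop N u)"
    hence ab: "a < N" "b < N" by auto
    have "(S * H) $$ (a,b) = S $$ (a,b) * 1 + S $$ (a,1) * z b"
      by (rule mult_col2[OF Sc Hc ab ab(2) N1]) (use He ab in auto)
    also have "S $$ (a,1) = (if a = 1 then 1 else 0)" using Se ab N1 r1 by (simp add: Sf_def)
    also have "S $$ (a,b) * 1 + (if a = 1 then 1 else 0) * z b = colop N u $$ (a,b)"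
      using ab by (auto simp: Se Sf_def colop_entry c_def z_def)
    finally show "(S * H) $$ (a,b) = colop N u $$ (a,b)" .
  qed (use Sc Hc in auto)
  have F: "(if even k then S $$ (k+1,b) else - S $$ (k-1,b)) = psi n $$ (k,b) + G k b"
    if kb: "k < N" "b < N" for k b
  proof (cases "even k")
    case True
    hence h: "k+1 < N" using kb N_def by presburger
    have e1: "(if even k then S $$ (k+1,b) else - S $$ (k-1,b)) = Sf (k+1) b" using Se kb h True by simp
    have e2: "psi n $$ (k,b) = (if b = k + 1 then 1 else 0)" using kb True h by (auto simp: psi_entry N_def)
    have e3: "r k = u$(k+1)" using True by (simp add: r_def)
    show ?thesis unfolding e1 e2 using e3 by (auto simp: Sf_def G_def)
  next
    case False
    hence h: "k-1 < N" "k \<ge> 1" "even (k-1)" "k - 1 + 1 = k" "k - 1 \<noteq> 1" using kb N_def by presburger+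
    have e1: "(if even k then S $$ (k+1,b) else - S $$ (k-1,b)) = - Sf (k-1) b" using Se kb h False by simp
    have e2: "psi n $$ (k,b) = (if b = k - 1 then -1 else 0)" using kb False h by (auto simp: psi_entry N_def)
    have e3: "r k = - u$(k-1)" using False by (simp add: r_def)
    have k0: "k \<noteq> 0" using h(2) by simp
    show ?thesis unfolding e1 e2 using e3 k0 h(5) by (auto simp: Sf_def G_def)
  qed
  have symp: "transpose_mat S * psi n * S = psi n"
  proof (rule eq_matI)
    fix a b assume "a < dim_row (psi n)" "b < dim_col (psi n)"
    hence ab: "a < N" "b < N" by (auto simp: N_def)
    have "(transpose_mat S * psi n * S) $$ (a,b) = (\<Sum>k<N. S $$ (k,a) * (if even k then S $$ (k+1,b) else - S $$ (k-1,b)))"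
      using Sc ab unfolding N_def by (intro symp_entry) auto
    also have "\<dots> = (\<Sum>k<N. S $$ (k,a) * (psi n $$ (k,b) + G k b))"
    proof (rule sum.cong)
      fix k assume "k \<in> {..<N}"
      hence k: "k < N" by simp
      show "S $$ (k,a) * (if even k then S $$ (k+1,b) else - S $$ (k-1,b)) = S $$ (k,a) * (psi n $$ (k,b) + G k b)"
        unfolding F[OF k ab(2)] by (rule refl)
    qed simp
    also have "\<dots> = (\<Sum>k<N. (if k = a then psi n $$ (a,b) + G a b else 0) +
        (if k = 1 then (r a + (if a = 0 then c else 0)) * (psi n $$ (1,b) + G 1 b) else 0) +
        (if a = 0 then u$k * psi n $$ (k,b) + u$k * G k b else 0))"
      by (rule sum.cong) (use ab in \<open>auto simp: Se Sf_def ring_distribs\<close>)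
    also have "\<dots> = psi n $$ (a,b) + G a b + (r a + (if a = 0 then c else 0)) * (psi n $$ (1,b) + G 1 b) +
        (if a = 0 then (\<Sum>k<N. u$k * psi n $$ (k,b)) + (\<Sum>k<N. u$k * G k b) else 0)"
      using ab N1 by (cases "a = 0") (simp_all add: sum.distrib)
    also have "(\<Sum>k<N. u$k * psi n $$ (k,b)) = - r b"
    proof -
      have "(\<Sum>k<N. u$k * psi n $$ (k,b)) = (if odd b then u$(b-1) else - u$(b+1))"
        using ab unfolding N_def by (intro sum_psi_r) auto
      then show ?thesis by (auto simp: r_def)
    qed
    also have "(\<Sum>k<N. u$k * G k b) = 0"
    proof -
      have "(\<Sum>k<N. u$k * G k b) = (\<Sum>k<N. (if b = 0 then r k * u$k else 0))"
      proof (rule sum.cong)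
        fix k assume "k \<in> {..<N}"
        show "u$k * G k b = (if b = 0 then r k * u$k else 0)"
        proof (cases "k = 0")
          case True then show ?thesis using u by (simp add: G_def)
        qed (simp add: G_def ring_distribs mult.commute)
      qed simp
      also have "\<dots> = (if b = 0 then (\<Sum>k<N. r k * u$k) else 0)"
        by (cases "b = 0") simp_all
      also have "(\<Sum>k<N. r k * u$k) = 0" unfolding N_def r_def by (rule alt_zero)
      finally show ?thesis by simp
    qed
    also have "psi n $$ (1,b) + G 1 b = - (if b = 0 then 1 else 0)"
      using ab r1 N1 by (auto simp: G_def psi_entry N_def)
    finally show "(transpose_mat S * psi n * S) $$ (a,b) = psi n $$ (a,b)"
      by (auto simp: G_def)
  qed (use Sc in \<open>auto simp: N_def\<close>)
  have y: "y \<in> carrier_vec (2*n-1)" "y$0 = 0" using n z1 by (auto simp: y_def)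
  show ?thesis using Sc symp y SH by (intro exI[of _ S] exI[of _ y]) (simp add: H_def N_def)
qed

lemma conj_row:
  fixes eta etai :: "'a::comm_ring_1 mat" and c :: 'a
  assumes eta: "eta \<in> carrier_mat m m" and etai: "etai \<in> carrier_mat m m" and inv: "etai * eta = 1\<^sub>m m"
    and j: "j < Suc m" "j \<noteq> 0"
  defines "w \<equiv> vec (Suc m) (\<lambda>b. c * one_perp etai $$ (j,b))"
  shows "one_perp eta * elem_mat (Suc m) 0 j c = rowop (Suc m) w * one_perp eta" and "w $ 0 = 0"
    and "w \<in> carrier_vec (Suc m)"
proof -
  have Y: "one_perp eta \<in> carrier_mat (Suc m) (Suc m)" by (rule one_perp_carrier[OF eta])
  have Yi: "one_perp etai \<in> carrier_mat (Suc m) (Suc m)" by (rule one_perp_carrier[OF etai])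
  have YiY: "one_perp etai * one_perp eta = 1\<^sub>m (Suc m)"
    using one_perp_mult[OF etai eta] inv one_perp_one by simp
  show "w $ 0 = 0" using j etai by (simp add: w_def one_perp_entry[OF etai])
  show "w \<in> carrier_vec (Suc m)" by (simp add: w_def)
  show "one_perp eta * elem_mat (Suc m) 0 j c = rowop (Suc m) w * one_perp eta"
  proof (rule eq_matI)
    fix a b assume "a < dim_row (rowop (Suc m) w * one_perp eta)" "b < dim_col (rowop (Suc m) w * one_perp eta)"
    hence ab: "a < Suc m" "b < Suc m" using Y by auto
    have l: "(one_perp eta * elem_mat (Suc m) 0 j c) $$ (a,b) = one_perp eta $$ (a,b) + (if b = j then (if a = 0 then c else 0) else 0)"
      using mult_elem_right[OF Y ab, of 0 j c] j by (simp add: one_perp_entry[OF eta] ab)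
    have "(rowop (Suc m) w * one_perp eta) $$ (a,b) = (\<Sum>k<Suc m. rowop (Suc m) w $$ (a,k) * one_perp eta $$ (k,b))"
      by (rule mult_entry[OF rowop_carrier Y ab])
    also have "\<dots> = (\<Sum>k<Suc m. (if k = a then one_perp eta $$ (a,b) else 0) + (if a = 0 then c * (one_perp etai $$ (j,k) * one_perp eta $$ (k,b)) else 0))"
      by (rule sum.cong) (use ab in \<open>auto simp: rowop_entry w_def ring_distribs\<close>)
    also have "\<dots> = one_perp eta $$ (a,b) + (if a = 0 then c * (\<Sum>k<Suc m. one_perp etai $$ (j,k) * one_perp eta $$ (k,b)) else 0)"
      using ab by (cases "a = 0") (simp_all add: sum.distrib sum_distrib_left del: sum.lessThan_Suc)
    also have "(\<Sum>k<Suc m. one_perp etai $$ (j,k) * one_perp eta $$ (k,b)) = (one_perp etai * one_perp eta) $$ (j,b)"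
      by (rule mult_entry[OF Yi Y j(1) ab(2), symmetric])
    also have "\<dots> = (if j = b then 1 else 0)" using YiY j ab by simp
    finally show "(one_perp eta * elem_mat (Suc m) 0 j c) $$ (a,b) = (rowop (Suc m) w * one_perp eta) $$ (a,b)"
      using l by auto
  qed (use Y in auto)
qed

lemma conj_col:
  fixes eta :: "'a::comm_ring_1 mat" and c :: 'a
  assumes eta: "eta \<in> carrier_mat m m" and i: "i < Suc m" "i \<noteq> 0"
  defines "u \<equiv> vec (Suc m) (\<lambda>a. c * one_perp eta $$ (a,i))"
  shows "one_perp eta * elem_mat (Suc m) i 0 c = colop (Suc m) u * one_perp eta" and "u $ 0 = 0"
    and "u \<in> carrier_vec (Suc m)"
proof -
  have Y: "one_perp eta \<in> carrier_mat (Suc m) (Suc m)" by (rule one_perp_carrier[OF eta])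
  show "u $ 0 = 0" using i eta by (simp add: u_def one_perp_entry[OF eta])
  show "u \<in> carrier_vec (Suc m)" by (simp add: u_def)
  show "one_perp eta * elem_mat (Suc m) i 0 c = colop (Suc m) u * one_perp eta"
  proof (rule eq_matI)
    fix a b assume "a < dim_row (colop (Suc m) u * one_perp eta)" "b < dim_col (colop (Suc m) u * one_perp eta)"
    hence ab: "a < Suc m" "b < Suc m" using Y by auto
    have l: "(one_perp eta * elem_mat (Suc m) i 0 c) $$ (a,b) = one_perp eta $$ (a,b) + (if b = 0 then one_perp eta $$ (a,i) * c else 0)"
      by (rule mult_elem_right[OF Y ab i(1)]) simp
    have "(colop (Suc m) u * one_perp eta) $$ (a,b) = 1 * one_perp eta $$ (a,b) + u $ a * one_perp eta $$ (0,b)"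
      by (rule mult_row2[OF colop_carrier Y ab ab(1)]) (use ab in \<open>auto simp: colop_entry\<close>)
    then show "(one_perp eta * elem_mat (Suc m) i 0 c) $$ (a,b) = (colop (Suc m) u * one_perp eta) $$ (a,b)"
      using l ab by (auto simp: u_def one_perp_entry[OF eta])
  qed (use Y in auto)
qed

lemma conj_blk:
  assumes eta: "eta \<in> carrier_mat m m" and ij: "i < Suc m" "j < Suc m" "i \<noteq> 0" "j \<noteq> 0"
  shows "one_perp eta * elem_mat (Suc m) i j c = one_perp (eta * elem_mat m (i-1) (j-1) c)"
proof -
  have "elem_mat (Suc m) i j c = elem_mat (Suc m) (Suc (i-1)) (Suc (j-1)) c" using ij by simp
  also have "\<dots> = one_perp (elem_mat m (i-1) (j-1) c)" using ij by (intro elem_perp) auto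
  finally show ?thesis using one_perp_mult[OF eta elem_carrier] by simp
qed

lemma symp_mult:
  assumes s: "s \<in> carrier_mat (2*n) (2*n)" and S: "S \<in> carrier_mat (2*n) (2*n)"
    and ss: "transpose_mat s * psi n * s = psi n" and SS: "transpose_mat S * psi n * S = psi n"
  shows "transpose_mat (s * S) * psi n * (s * S) = psi n"
proof -
  have sT: "transpose_mat s \<in> carrier_mat (2*n) (2*n)" and ST: "transpose_mat S \<in> carrier_mat (2*n) (2*n)"
    using s S by auto
  have sp: "transpose_mat s * psi n \<in> carrier_mat (2*n) (2*n)" using sT by simp
  have 1: "transpose_mat (s * S) = transpose_mat S * transpose_mat s" by (rule transpose_mult[OF s S])
  have 2: "(transpose_mat S * transpose_mat s) * psi n = transpose_mat S * (transpose_mat s * psi n)"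
    by (rule assoc_mult_mat[OF ST sT psi_carrier])
  have 3: "transpose_mat S * (transpose_mat s * psi n) * (s * S) = transpose_mat S * ((transpose_mat s * psi n) * (s * S))"
    by (rule assoc_mult_mat[OF ST sp mult_carrier_mat[OF s S]])
  have 4: "(transpose_mat s * psi n) * (s * S) = ((transpose_mat s * psi n) * s) * S"
    by (rule assoc_mult_mat[OF sp s S, symmetric])
  have 5: "transpose_mat S * (psi n * S) = transpose_mat S * psi n * S"
    by (rule assoc_mult_mat[OF ST psi_carrier S, symmetric])
  show ?thesis unfolding 1 2 3 4 ss 5 SS by (rule refl)
qed

lemma step:
  fixes s eta :: "'a::comm_ring_1 mat"
  assumes n: "n \<ge> 1" and s: "s \<in> carrier_mat (2*n) (2*n)" and ss: "transpose_mat s * psi n * s = psi n"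
    and e1: "eta \<in> E_phi (psi n)" and e2: "eta \<in> Elem (2*n-1)"
    and ij: "i < 2*n" "j < 2*n" "i \<noteq> j"
  shows "\<exists>s' eta'. s' \<in> carrier_mat (2*n) (2*n) \<and> transpose_mat s' * psi n * s' = psi n \<and>
    eta' \<in> E_phi (psi n) \<and> eta' \<in> Elem (2*n-1) \<and>
    s * one_perp eta * elem_mat (2*n) i j c = s' * one_perp eta'"
proof -
  obtain m where SN: "2*n = Suc m" using n by (metis Suc_pred' mult_pos_pos zero_less_numeral le_less_trans less_numeral_extra(1) less_one not_le)
  have M: "2*n-1 = m" using SN by simp
  have eta: "eta \<in> carrier_mat m m" using Elem_carrier e2 M by simp
  have Y: "one_perp eta \<in> carrier_mat (Suc m) (Suc m)" by (rule one_perp_carrier[OF eta])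
  have s': "s \<in> carrier_mat (Suc m) (Suc m)" using s SN by simp
  have A: "s * one_perp eta * elem_mat (Suc m) i j c = s * (one_perp eta * elem_mat (Suc m) i j c)"
    by (rule assoc_mult_mat[OF s' Y elem_carrier])
  have e1': "eta \<in> E_phi (psi n)" and e2': "eta \<in> Elem m" using e1 e2 M by auto
  have ij': "i < Suc m" "j < Suc m" using ij SN by auto
  consider "i = 0" | "j = 0" | "i \<noteq> 0" "j \<noteq> 0" by blast
  then have "\<exists>s' eta'. s' \<in> carrier_mat (Suc m) (Suc m) \<and> transpose_mat s' * psi n * s' = psi n \<and>
    eta' \<in> E_phi (psi n) \<and> eta' \<in> Elem m \<and>
    s * one_perp eta * elem_mat (Suc m) i j c = s' * one_perp eta'"
  proof cases
    case 1
    hence j0: "j \<noteq> 0" using ij by simp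
    obtain etai where etai: "etai \<in> carrier_mat m m" "eta * etai = 1\<^sub>m m" "etai * eta = 1\<^sub>m m"
      using Elem_inv[OF e2'] by blast
    define w where "w = vec (Suc m) (\<lambda>b. c * one_perp etai $$ (j,b))"
    note cr = conj_row[OF eta etai(1) etai(3) ij'(2) j0, of c, folded w_def]
    have wc: "w \<in> carrier_vec (2*n)" using cr(3) SN by simp
    obtain S y where Sy: "S \<in> carrier_mat (2*n) (2*n)" "transpose_mat S * psi n * S = psi n"
      "y \<in> carrier_vec (2*n-1)" "y$0 = 0" "rowop (2*n) w = S * one_perp (colop (2*n-1) y)"
      using row_dec[OF n wc cr(2)] by blast
    have S': "S \<in> carrier_mat (Suc m) (Suc m)" using Sy(1) SN by simp
    have y': "y \<in> carrier_vec m" using Sy(3) M by simp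
    have H: "one_perp (colop m y) \<in> carrier_mat (Suc m) (Suc m)" by (rule one_perp_carrier[OF colop_carrier])
    have dec: "rowop (Suc m) w = S * one_perp (colop m y)" using Sy(5) SN M by simp
    have "s * one_perp eta * elem_mat (Suc m) i j c = s * (rowop (Suc m) w * one_perp eta)"
      unfolding A unfolding 1 cr(1) by (rule refl)
    also have "\<dots> = s * ((S * one_perp (colop m y)) * one_perp eta)" unfolding dec by (rule refl)
    also have "\<dots> = s * (S * (one_perp (colop m y) * one_perp eta))"
      by (subst assoc_mult_mat[OF S' H Y]) (rule refl)
    also have "\<dots> = (s * S) * (one_perp (colop m y) * one_perp eta)"
      by (rule assoc_mult_mat[OF s' S' mult_carrier_mat[OF H Y], symmetric])
    also have "\<dots> = (s * S) * one_perp (colop m y * eta)"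
      by (subst one_perp_mult[OF colop_carrier eta]) (rule refl)
    finally have eq: "s * one_perp eta * elem_mat (Suc m) i j c = (s * S) * one_perp (colop m y * eta)" .
    have "colop m y \<in> Elem m" by (rule colop_Elem[OF y' Sy(4)])
    hence el: "colop m y * eta \<in> Elem m" using Elem_mult e2' by blast
    have "colop m y \<in> E_phi (psi n)" using colop_Ephi[OF n Sy(3,4)] M by simp
    hence ep: "colop m y * eta \<in> E_phi (psi n)" using Ephi_mult e1' by blast
    have sy: "transpose_mat (s * S) * psi n * (s * S) = psi n" by (rule symp_mult[OF s Sy(1) ss Sy(2)])
    show ?thesis using eq el ep sy mult_carrier_mat[OF s' S'] by blast
  next
    case 2
    hence i0: "i \<noteq> 0" using ij by simp
    define u where "u = vec (Suc m) (\<lambda>a. c * one_perp eta $$ (a,i))"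
    note cc = conj_col[OF eta ij'(1) i0, of c, folded u_def]
    have uc: "u \<in> carrier_vec (2*n)" using cc(3) SN by simp
    obtain S y where Sy: "S \<in> carrier_mat (2*n) (2*n)" "transpose_mat S * psi n * S = psi n"
      "y \<in> carrier_vec (2*n-1)" "y$0 = 0" "colop (2*n) u = S * one_perp (rowop (2*n-1) y)"
      using col_dec[OF n uc cc(2)] by blast
    have S': "S \<in> carrier_mat (Suc m) (Suc m)" using Sy(1) SN by simp
    have y': "y \<in> carrier_vec m" using Sy(3) M by simp
    have H: "one_perp (rowop m y) \<in> carrier_mat (Suc m) (Suc m)" by (rule one_perp_carrier[OF rowop_carrier])
    have dec: "colop (Suc m) u = S * one_perp (rowop m y)" using Sy(5) SN M by simp
    have "s * one_perp eta * elem_mat (Suc m) i j c = s * (colop (Suc m) u * one_perp eta)"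
      unfolding A unfolding 2 cc(1) by (rule refl)
    also have "\<dots> = s * ((S * one_perp (rowop m y)) * one_perp eta)" unfolding dec by (rule refl)
    also have "\<dots> = s * (S * (one_perp (rowop m y) * one_perp eta))"
      by (subst assoc_mult_mat[OF S' H Y]) (rule refl)
    also have "\<dots> = (s * S) * (one_perp (rowop m y) * one_perp eta)"
      by (rule assoc_mult_mat[OF s' S' mult_carrier_mat[OF H Y], symmetric])
    also have "\<dots> = (s * S) * one_perp (rowop m y * eta)"
      by (subst one_perp_mult[OF rowop_carrier eta]) (rule refl)
    finally have eq: "s * one_perp eta * elem_mat (Suc m) i j c = (s * S) * one_perp (rowop m y * eta)" .
    have "rowop m y \<in> Elem m" by (rule rowop_Elem[OF y' Sy(4)])
    hence el: "rowop m y * eta \<in> Elem m" using Elem_mult e2' by blast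
    have "rowop m y \<in> E_phi (psi n)" using rowop_Ephi[OF n Sy(3,4)] M by simp
    hence ep: "rowop m y * eta \<in> E_phi (psi n)" using Ephi_mult e1' by blast
    have sy: "transpose_mat (s * S) * psi n * (s * S) = psi n" by (rule symp_mult[OF s Sy(1) ss Sy(2)])
    show ?thesis using eq el ep sy mult_carrier_mat[OF s' S'] by blast
  next
    case 3
    have eq: "s * one_perp eta * elem_mat (Suc m) i j c = s * one_perp (eta * elem_mat m (i-1) (j-1) c)"
      unfolding A conj_blk[OF eta ij' 3] by (rule refl)
    have ij'': "i - 1 < m" "j - 1 < m" "i - 1 \<noteq> j - 1" using ij' 3 ij(3) by auto
    have el: "eta * elem_mat m (i-1) (j-1) c \<in> Elem m" using Elem_mult[OF e2' Elem_elem[OF ij'']] .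
    have "elem_mat m (i-1) (j-1) c \<in> E_phi (psi n)" using elem_Ephi[OF n] ij'' M by simp
    hence ep: "eta * elem_mat m (i-1) (j-1) c \<in> E_phi (psi n)" using Ephi_mult e1' by blast
    show ?thesis using eq el ep ss s' by blast
  qed
  then show ?thesis unfolding M unfolding SN by simp
qed

lemma form_mult:
  assumes s: "s \<in> carrier_mat (2*n) (2*n)" and S: "S \<in> carrier_mat (2*n) (2*n)"
    and ss: "transpose_mat s * psi n * s = psi n"
  shows "transpose_mat (s * S) * psi n * (s * S) = transpose_mat S * psi n * S"
proof -
  have sT: "transpose_mat s \<in> carrier_mat (2*n) (2*n)" and ST: "transpose_mat S \<in> carrier_mat (2*n) (2*n)"
    using s S by auto
  have sp: "transpose_mat s * psi n \<in> carrier_mat (2*n) (2*n)" using sT by simp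
  have 1: "transpose_mat (s * S) = transpose_mat S * transpose_mat s" by (rule transpose_mult[OF s S])
  have 2: "(transpose_mat S * transpose_mat s) * psi n = transpose_mat S * (transpose_mat s * psi n)"
    by (rule assoc_mult_mat[OF ST sT psi_carrier])
  have 3: "transpose_mat S * (transpose_mat s * psi n) * (s * S) = transpose_mat S * ((transpose_mat s * psi n) * (s * S))"
    by (rule assoc_mult_mat[OF ST sp mult_carrier_mat[OF s S]])
  have 4: "(transpose_mat s * psi n) * (s * S) = ((transpose_mat s * psi n) * s) * S"
    by (rule assoc_mult_mat[OF sp s S, symmetric])
  have 5: "transpose_mat S * (psi n * S) = transpose_mat S * psi n * S"
    by (rule assoc_mult_mat[OF ST psi_carrier S, symmetric])
  show ?thesis unfolding 1 2 3 4 ss 5 by (rule refl)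
qed

theorem corollary4p4:
  fixes n :: nat and eps :: "'a::comm_ring_1 mat"
  assumes "n \<ge> 2" and "eps \<in> Elem (2*n)"
  shows "\<exists>eps0. eps0 \<in> E_phi (psi n) \<and> eps0 \<in> Elem (2*n - 1) \<and>
     transpose_mat eps * psi n * eps
       = transpose_mat (one_perp eps0) * psi n * one_perp eps0"
proof -
  have n: "n \<ge> 1" using assms(1) by simp
  have SN: "Suc (2*n-1) = 2*n" using n by simp
  have "\<exists>s eta. s \<in> carrier_mat (2*n) (2*n) \<and> transpose_mat s * psi n * s = psi n \<and>
      eta \<in> E_phi (psi n) \<and> eta \<in> Elem (2*n-1) \<and> eps = s * one_perp eta"
    using assms(2) unfolding Elem_def
  proof induction
    case one
    let ?I = "1\<^sub>m (2*n) :: 'a mat" and ?J = "1\<^sub>m (2*n-1) :: 'a mat"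
    have a: "?I * one_perp ?J = ?I" using SN by (simp add: one_perp_one)
    have b: "transpose_mat ?I * psi n * ?I = psi n" by simp
    have c: "?J \<in> gen_group (2*n-1) {elem_mat (2*n-1) i j lam |i j lam. i < 2*n-1 \<and> j < 2*n-1 \<and> i \<noteq> j}"
      by (rule gen_group.one)
    have "?I \<in> carrier_mat (2*n) (2*n) \<and> transpose_mat ?I * psi n * ?I = psi n \<and> ?J \<in> E_phi (psi n) \<and>
      ?J \<in> gen_group (2*n-1) {elem_mat (2*n-1) i j lam |i j lam. i < 2*n-1 \<and> j < 2*n-1 \<and> i \<noteq> j} \<and> ?I = ?I * one_perp ?J"
      using a b c Ephi_one[of n] by simp
    then show ?case by blast
  next
    case (mult A g)
    obtain i j c where g: "g = elem_mat (2*n) i j c" "i < 2*n" "j < 2*n" "i \<noteq> j" using mult(2) by blast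
    obtain s eta where se: "s \<in> carrier_mat (2*n) (2*n)" "transpose_mat s * psi n * s = psi n"
      "eta \<in> E_phi (psi n)" "eta \<in> gen_group (2*n-1) {elem_mat (2*n-1) i j lam |i j lam. i < 2*n-1 \<and> j < 2*n-1 \<and> i \<noteq> j}"
      "A = s * one_perp eta" using mult(3) by blast
    have "eta \<in> Elem (2*n-1)" using se(4) by (simp add: Elem_def)
    from step[OF n se(1,2,3) this g(2,3,4), of c]
    show ?case unfolding g(1) se(5) by (auto simp: Elem_def)
  next
    case (mult_inv A g h)
    obtain i j c where g: "g = elem_mat (2*n) i j c" "i < 2*n" "j < 2*n" "i \<noteq> j" using mult_inv(2) by blast
    have hh: "h = elem_mat (2*n) i j (-c)"
    proof -
      have ee: "elem_mat (2*n) i j (-c) * g = 1\<^sub>m (2*n)" using elem_inv[OF g(2-4), of "-c"] g(1) by simp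
      have "h = 1\<^sub>m (2*n) * h" using mult_inv(3) by simp
      also have "\<dots> = (elem_mat (2*n) i j (-c) * g) * h" using ee by simp
      also have "\<dots> = elem_mat (2*n) i j (-c) * (g * h)"
        using g(1) mult_inv(3) by (intro assoc_mult_mat) auto
      also have "\<dots> = elem_mat (2*n) i j (-c)" using mult_inv(4) by simp
      finally show ?thesis .
    qed
    obtain s eta where se: "s \<in> carrier_mat (2*n) (2*n)" "transpose_mat s * psi n * s = psi n"
      "eta \<in> E_phi (psi n)" "eta \<in> gen_group (2*n-1) {elem_mat (2*n-1) i j lam |i j lam. i < 2*n-1 \<and> j < 2*n-1 \<and> i \<noteq> j}"
      "A = s * one_perp eta" using mult_inv(6) by blast
    have "eta \<in> Elem (2*n-1)" using se(4) by (simp add: Elem_def)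
    from step[OF n se(1,2,3) this g(2,3,4), of "-c"]
    show ?case unfolding hh se(5) by (auto simp: Elem_def)
  qed
  then obtain s eta where se: "s \<in> carrier_mat (2*n) (2*n)" "transpose_mat s * psi n * s = psi n"
      "eta \<in> E_phi (psi n)" "eta \<in> Elem (2*n-1)" "eps = s * one_perp eta" by blast
  have Y: "one_perp eta \<in> carrier_mat (2*n) (2*n)"
    using one_perp_carrier[OF Elem_carrier[OF se(4)]] SN by simp
  have "transpose_mat eps * psi n * eps = transpose_mat (one_perp eta) * psi n * one_perp eta"
    unfolding se(5) by (rule form_mult[OF se(1) Y se(2)])
  then show ?thesis using se(3,4) by blast
qed

end
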